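(* Let $K\ge2$ and let $|H_1|^2,\dots,|H_K|^2,|H_e|^2$ be i.i.d. exponential random variables with unit mean, and let $|H_{\max}|^2=\max_{1\le i\le K}|H_i|^2$. Then $$E\left[\log\frac{|H_e|^2}{|H_{\max}|^2}\ \Big|\ |H_e|^2\ge|H_{\max}|^2\right]\le2\log2.$$
   Context: The logarithm is to any fixed base, the same on both sides. *)

theory Defs
  imports "HOL-Probability.Probability"
begin

definition cond_exp_event :: "'a measure \<Rightarrow> ('a \<Rightarrow> real) \<Rightarrow> 'a set \<Rightarrow> real" where
  "cond_exp_event M f A = (LINT x:A|M. f x) / measure M A"

end

theory Submission
  imports Defs
begin


lemma psi_nonneg:
  fixes t :: real assumes "0 \<le> t"
  shows "2 * (exp t - 1) \<le> t * (exp t + 1)"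
proof -
  have phi: "0 \<le> 1 + (s - 1) * exp s" if "0 \<le> s" for s :: real
  proof -
    have "1 + (0 - 1) * exp 0 \<le> 1 + (s - 1) * exp (s::real)"
      by (rule DERIV_nonneg_imp_nondecreasing[of 0 s "\<lambda>s. 1 + (s - 1) * exp s"])
         (auto intro!: exI derivative_eq_intros simp: that algebra_simps)
    then show ?thesis by simp
  qed
  have "0 * (exp 0 + 1) - 2 * (exp 0 - 1) \<le> t * (exp t + 1) - 2 * (exp t - 1)"
  proof (rule DERIV_nonneg_imp_nondecreasing[of 0 t "\<lambda>t. t * (exp t + 1) - 2 * (exp t - 1)"])
    fix x :: real assume x: "0 \<le> x" "x \<le> t"
    show "\<exists>y. ((\<lambda>t. t * (exp t + 1) - 2 * (exp t - 1)) has_real_derivative y) (at x) \<and> 0 \<le> y"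
      apply (rule exI[of _ "1 + (x - 1) * exp x"])
      apply (intro conjI phi x)
       apply (rule derivative_eq_intros refl | simp)+
      apply (simp add: algebra_simps)
      done
  qed (use assms in auto)
  then show ?thesis by simp
qed

lemma key_bound:
  fixes t :: real and K :: nat assumes "0 < t" "K \<ge> 1"
  shows "exp (-t) * (1 - exp (-t)) ^ K / t \<le> (1 - exp (-t)) ^ (K - 1) * (1 - (1 - exp (-t)) / 2) * exp (-t)"
proof -
  define u where "u = 1 - exp (-t)"
  have u: "0 < u" "u < 1" using assms by (auto simp: u_def)
  have e: "exp (-t) = 1 / exp t" by (simp add: exp_minus field_simps)
  have "2 * (exp t - 1) \<le> t * (exp t + 1)" using psi_nonneg assms by auto
  moreover have "exp t > 0" by simp
  ultimately have "u \<le> t * (1 - u / 2)"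
    unfolding u_def exp_minus apply (simp add: field_simps)
    apply (drule mult_right_mono[of _ _ "exp t"])
    by (simp_all add: algebra_simps)
  then have "u / t \<le> 1 - u / 2" using assms by (simp add: field_simps)
  then have "u ^ (K-1) * (u / t) * exp (-t) \<le> u ^ (K-1) * (1 - u / 2) * exp (-t)"
    using u by (intro mult_right_mono mult_left_mono) auto
  moreover have "u ^ K = u ^ (K-1) * u" using assms
    by (metis Suc_diff_le diff_Suc_1 power_Suc2)
  ultimately show ?thesis unfolding u_def[symmetric] by (simp add: field_simps)
qed


lemma exp_neg_lim: "((\<lambda>t::real. exp (-t)) \<longlongrightarrow> 0) at_top"
  using filterlim_compose[OF exp_at_bot filterlim_uminus_at_bot_at_top] by (simp add: o_def)

lemma int_h:
  fixes K :: nat assumes "K \<ge> 1"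
  shows "(\<integral>\<^sup>+t. ennreal ((1 - exp (-t)) ^ (K - 1) * (1 - (1 - exp (-t)) / 2) * exp (-t)) * indicator {0..} t \<partial>lborel)
     = ennreal (1 / K - 1 / (2 * (K + 1)))"
proof -
  let ?F = "\<lambda>t::real. (1 - exp (-t)) ^ K / real K - (1 - exp (-t)) ^ (Suc K) / (2 * real (Suc K))"
  have "(\<integral>\<^sup>+t. ennreal ((1 - exp (-t)) ^ (K - 1) * (1 - (1 - exp (-t)) / 2) * exp (-t)) * indicator {0..} t \<partial>lborel)
     = (1 / K - 1 / (2 * (K + 1))) - ?F 0"
  proof (rule nn_integral_FTC_atLeast)
    show "(\<lambda>t::real. (1 - exp (-t)) ^ (K - 1) * (1 - (1 - exp (-t)) / 2) * exp (-t)) \<in> borel_measurable borel"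
      by (intro borel_measurable_continuous_onI continuous_intros) auto
  next
    fix x :: real assume x: "0 \<le> x"
    show "DERIV ?F x :> (1 - exp (-x)) ^ (K - 1) * (1 - (1 - exp (-x)) / 2) * exp (-x)"
    proof -
      have e: "(1 - exp (-x)) ^ K = (1 - exp (-x)) ^ (K - 1) * (1 - exp (-x))" using assms
        by (metis Suc_diff_le diff_Suc_1 power_Suc2)
      have d: "DERIV (\<lambda>t. 1 - exp (-t)) x :> exp (-x)" by (auto intro!: derivative_eq_intros)
      note D = DERIV_diff[OF DERIV_cdivide[OF DERIV_power[OF d, of K], of "real K"]
           DERIV_cdivide[OF DERIV_power[OF d, of "Suc K"], of "2 * real (Suc K)"]]
      show ?thesis
        apply (rule DERIV_cong[OF D])
        using assms by (simp add: field_simps e)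
    qed
    have "exp (-x) \<le> 1" "0 < exp (-x)" using x by auto
    then have a: "0 \<le> 1 - exp(-x)" and b: "0 \<le> 1 - (1 - exp (-x))/2" by (simp_all add: field_simps)
    show "0 \<le> (1 - exp (-x)) ^ (K - 1) * (1 - (1 - exp (-x)) / 2) * exp (-x)"
      by (intro mult_nonneg_nonneg zero_le_power a b) simp
  next
    have L: "((\<lambda>t::real. 1 - exp (-t)) \<longlongrightarrow> 1 - 0) at_top"
      by (intro tendsto_diff tendsto_const exp_neg_lim)
    show "(?F \<longlongrightarrow> 1 / K - 1 / (2 * (K + 1))) at_top"
      using tendsto_diff[OF tendsto_divide[OF tendsto_power[OF L, of K] tendsto_const[of "real K"]]
        tendsto_divide[OF tendsto_power[OF L, of "Suc K"] tendsto_const[of "2 * real (Suc K)"]]] using assms by simp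
  qed
  moreover have "(0::real) ^ K = 0" using assms by simp
  ultimately show ?thesis by simp
qed

lemma int_P:
  fixes K :: nat
  shows "(\<integral>\<^sup>+t. ennreal (exp (-t) * (1 - exp (-t)) ^ K) * indicator {0..} t \<partial>lborel)
     = ennreal (1 / (K + 1))"
proof -
  let ?F = "\<lambda>t::real. (1 - exp (-t)) ^ (Suc K) / real (Suc K)"
  have "(\<integral>\<^sup>+t. ennreal (exp (-t) * (1 - exp (-t)) ^ K) * indicator {0..} t \<partial>lborel)
     = 1 / (K + 1) - ?F 0"
  proof (rule nn_integral_FTC_atLeast)
    show "(\<lambda>t::real. exp (-t) * (1 - exp (-t)) ^ K) \<in> borel_measurable borel"
      by (intro borel_measurable_continuous_onI continuous_intros)
  next
    fix x :: real assume x: "0 \<le> x"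
    have d: "DERIV (\<lambda>t. 1 - exp (-t)) x :> exp (-x)" by (auto intro!: derivative_eq_intros)
    note D = DERIV_cdivide[OF DERIV_power[OF d, of "Suc K"], of "real (Suc K)"]
    show "DERIV ?F x :> exp (-x) * (1 - exp (-x)) ^ K"
      by (rule DERIV_cong[OF D]) (simp add: field_simps)
    show "0 \<le> exp (-x) * (1 - exp (-x)) ^ K"
      using x by (intro mult_nonneg_nonneg) auto
  next
    have L: "((\<lambda>t::real. 1 - exp (-t)) \<longlongrightarrow> 1 - 0) at_top"
      by (intro tendsto_diff tendsto_const exp_neg_lim)
    show "(?F \<longlongrightarrow> 1 / (K + 1)) at_top"
      using tendsto_divide[OF tendsto_power[OF L, of "Suc K"] tendsto_const[of "real (Suc K)"]] by simp
  qed
  then show ?thesis by simp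
qed

lemma int_ln:
  fixes a b :: real assumes "0 < a" "a \<le> b"
  shows "(\<integral>\<^sup>+t. ennreal (1 / t) * indicator {a..<b} t \<partial>lborel) = ennreal (ln b - ln a)"
proof -
  have "(\<integral>\<^sup>+t. ennreal (1 / t) * indicator {a..<b} t \<partial>lborel)
      = (\<integral>\<^sup>+t. ennreal (1 / t) * indicator {a..b} t \<partial>lborel)"
    by (intro nn_integral_cong_AE) (auto intro!: eventually_mono[OF AE_lborel_singleton[of b]] split: split_indicator)
  also have "\<dots> = ln b - ln a"
  proof (rule nn_integral_FTC_Icc)
    show "(\<lambda>t::real. 1 / t) \<in> borel_measurable borel" by measurable
    fix x assume "x \<in> {a..b}"
    with assms show "DERIV ln x :> 1 / x" "0 \<le> 1 / x"
      by (auto intro!: derivative_eq_intros)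
  qed fact
  finally show ?thesis .
qed


context prob_space
begin

lemma main:
  fixes H :: "nat \<Rightarrow> 'a \<Rightarrow> real" and K :: nat and b :: real
  assumes K: "K \<ge> 2" and b: "b > 1"
    and ind: "indep_vars (\<lambda>_. borel) H {0..K}"
    and dist: "\<And>i. i \<in> {0..K} \<Longrightarrow> distributed M lborel (H i) (exponential_density 1)"
  defines "X \<equiv> H 0" and "Y \<equiv> (\<lambda>\<omega>. Max ((\<lambda>i. H i \<omega>) ` {1..K}))"
  defines "E \<equiv> {\<omega> \<in> space M. X \<omega> \<ge> Y \<omega>}"
  shows "set_integrable M E (\<lambda>\<omega>. log b (X \<omega> / Y \<omega>))
    \<and> cond_exp_event M (\<lambda>\<omega>. log b (X \<omega> / Y \<omega>)) E \<le> 2 * log b 2"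
proof -
  have Hm: "H i \<in> borel_measurable M" if "i \<in> {0..K}" for i
    using distributed_measurable[OF dist[OF that]] by simp
  have Xm[measurable]: "X \<in> borel_measurable M" unfolding X_def using Hm by auto
  have Ym[measurable]: "Y \<in> borel_measurable M" unfolding Y_def
    by (rule borel_measurable_Max) (use Hm in auto)
  have Em[measurable]: "E \<in> sets M" unfolding E_def by measurable
  have fin: "finite {1..K}" "{1..K} \<noteq> {}" using K by auto
  have Yle: "Y \<omega> \<le> t \<longleftrightarrow> (\<forall>i\<in>{1..K}. H i \<omega> \<le> t)" for \<omega> t
    unfolding Y_def using fin by (simp add: Max_le_iff)
  have le_exp: "prob {\<omega> \<in> space M. H i \<omega> \<le> t} = 1 - exp (- t)" if "i \<in> {0..K}" "0 \<le> t" for i t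
    using exponential_distributedD_le[OF dist[OF that(1)] that(2)] by simp
  have gt_exp: "prob {\<omega> \<in> space M. t < H i \<omega>} = exp (- t)" if "i \<in> {0..K}" "0 \<le> t" for i t
    using exponential_distributedD_gt[OF dist[OF that(1)] that(2)] by simp
  have pos: "AE \<omega> in M. \<forall>i\<in>{0..K}. 0 < H i \<omega>"
  proof (rule AE_finite_allI)
    fix i assume i: "i \<in> {0..K}"
    show "AE \<omega> in M. 0 < H i \<omega>"
    proof (rule AE_I')
      show "{\<omega> \<in> space M. H i \<omega> \<le> 0} \<in> null_sets M"
        using le_exp[OF i, of 0] Hm[OF i] by (simp add: emeasure_eq_measure null_sets_def)
    qed auto
  qed simp
  have posXY: "AE \<omega> in M. 0 < X \<omega> \<and> 0 < Y \<omega>"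
  proof (rule eventually_mono[OF pos])
    fix \<omega> assume a: "\<forall>i\<in>{0..K}. 0 < H i \<omega>"
    then have "0 < H 1 \<omega>" using K by auto
    also have "H 1 \<omega> \<le> Y \<omega>" unfolding Y_def using fin K by (intro Max_ge) auto
    finally show "0 < X \<omega> \<and> 0 < Y \<omega>" using a unfolding X_def by auto
  qed
  have strip: "emeasure M {\<omega> \<in> space M. Y \<omega> \<le> t \<and> t < X \<omega>} = ennreal (exp (- t) * (1 - exp (- t)) ^ K)"
    if t: "0 \<le> t" for t
  proof -
    define A where "A i = (if i = 0 then {t<..} else {..t})" for i :: nat
    have "{\<omega> \<in> space M. Y \<omega> \<le> t \<and> t < X \<omega>} = (\<Inter>i\<in>{0..K}. H i -` A i \<inter> space M)"
      unfolding Yle X_def A_def using K by (auto split: if_splits)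
    then have "prob {\<omega> \<in> space M. Y \<omega> \<le> t \<and> t < X \<omega>} = (\<Prod>i\<in>{0..K}. prob (H i -` A i \<inter> space M))"
      using indep_varsD[OF ind, of "{0..K}" A] by (simp add: A_def)
    also have "{0..K} = insert 0 {1..K}" by auto
    also have "(\<Prod>i\<in>insert 0 {1..K}. prob (H i -` A i \<inter> space M))
        = prob (H 0 -` A 0 \<inter> space M) * (\<Prod>i\<in>{1..K}. prob (H i -` A i \<inter> space M))"
      by (simp add: prod.insert)
    also have "(\<Prod>i\<in>{1..K}. prob (H i -` A i \<inter> space M)) = (\<Prod>i\<in>{1..K}. 1 - exp (- t))"
    proof (rule prod.cong)
      fix i assume i: "i \<in> {1..K}"
      then have "H i -` A i \<inter> space M = {\<omega> \<in> space M. H i \<omega> \<le> t}" by (auto simp: A_def)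
      then show "prob (H i -` A i \<inter> space M) = 1 - exp (- t)" using le_exp[of i t] i t by simp
    qed simp
    also have "prob (H 0 -` A 0 \<inter> space M) = exp (- t)"
    proof -
      have "H 0 -` A 0 \<inter> space M = {\<omega> \<in> space M. t < H 0 \<omega>}" by (auto simp: A_def)
      then show ?thesis using gt_exp[of 0 t] t by simp
    qed
    finally show ?thesis by (simp add: emeasure_eq_measure)
  qed
  define g where "g \<omega> = ln (X \<omega> / Y \<omega>)" for \<omega>
  define \<Phi> where "\<Phi> \<omega> t = (if Y \<omega> \<le> t \<and> t < X \<omega> \<and> 0 < t then ennreal (1 / t) else 0)" for \<omega> t
  have \<Phi>m: "case_prod \<Phi> \<in> borel_measurable (M \<Otimes>\<^sub>M lborel)"
    unfolding \<Phi>_def by measurable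
  have g_eq: "AE \<omega> in M. indicator E \<omega> * ennreal (g \<omega>) = (\<integral>\<^sup>+t. \<Phi> \<omega> t \<partial>lborel)"
  proof (rule eventually_mono[OF eventually_conj[OF posXY AE_space]])
    fix \<omega> assume a: "(0 < X \<omega> \<and> 0 < Y \<omega>) \<and> \<omega> \<in> space M"
    have "(\<integral>\<^sup>+t. \<Phi> \<omega> t \<partial>lborel) = (\<integral>\<^sup>+t. ennreal (1 / t) * indicator {Y \<omega>..<X \<omega>} t \<partial>lborel)"
      using a by (intro nn_integral_cong) (auto simp: \<Phi>_def split: split_indicator)
    also have "\<dots> = indicator E \<omega> * ennreal (g \<omega>)"
    proof (cases "Y \<omega> \<le> X \<omega>")
      case True
      then show ?thesis using a int_ln[of "Y \<omega>" "X \<omega>"]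
        by (simp add: E_def g_def ln_div)
    next
      case False
      then show ?thesis using a by (simp add: E_def)
    qed
    finally show "indicator E \<omega> * ennreal (g \<omega>) = (\<integral>\<^sup>+t. \<Phi> \<omega> t \<partial>lborel)" ..
  qed
  interpret PS: pair_sigma_finite M lborel
    by (intro pair_sigma_finite.intro sigma_finite_measure_axioms lborel.sigma_finite_measure_axioms)
  have inner: "(\<integral>\<^sup>+\<omega>. \<Phi> \<omega> t \<partial>M) = (if 0 < t then ennreal (1 / t) * ennreal (exp (- t) * (1 - exp (- t)) ^ K) else 0)" for t
  proof (cases "0 < t")
    case True
    have "(\<integral>\<^sup>+\<omega>. \<Phi> \<omega> t \<partial>M) = (\<integral>\<^sup>+\<omega>. ennreal (1 / t) * indicator {\<omega> \<in> space M. Y \<omega> \<le> t \<and> t < X \<omega>} \<omega> \<partial>M)"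
      using True by (intro nn_integral_cong) (auto simp: \<Phi>_def split: split_indicator)
    also have "\<dots> = ennreal (1 / t) * emeasure M {\<omega> \<in> space M. Y \<omega> \<le> t \<and> t < X \<omega>}"
      by (rule nn_integral_cmult_indicator) measurable
    finally show ?thesis using strip[of t] True by simp
  next
    case False
    then show ?thesis by (simp add: \<Phi>_def)
  qed
  have I1: "(\<integral>\<^sup>+\<omega>. indicator E \<omega> * ennreal (g \<omega>) \<partial>M) \<le> ennreal (1 / K - 1 / (2 * (K + 1)))"
  proof -
    have "(\<integral>\<^sup>+\<omega>. indicator E \<omega> * ennreal (g \<omega>) \<partial>M) = (\<integral>\<^sup>+\<omega>. (\<integral>\<^sup>+t. \<Phi> \<omega> t \<partial>lborel) \<partial>M)"
      by (rule nn_integral_cong_AE[OF g_eq])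
    also have "\<dots> = (\<integral>\<^sup>+t. (\<integral>\<^sup>+\<omega>. \<Phi> \<omega> t \<partial>M) \<partial>lborel)"
      by (rule PS.Fubini'[OF \<Phi>m, symmetric])
    also have "\<dots> \<le> (\<integral>\<^sup>+t. ennreal ((1 - exp (-t)) ^ (K - 1) * (1 - (1 - exp (-t)) / 2) * exp (-t)) * indicator {0..} t \<partial>lborel)"
    proof (rule nn_integral_mono)
      fix t :: real
      show "(\<integral>\<^sup>+\<omega>. \<Phi> \<omega> t \<partial>M) \<le> ennreal ((1 - exp (-t)) ^ (K - 1) * (1 - (1 - exp (-t)) / 2) * exp (-t)) * indicator {0..} t"
      proof (cases "0 < t")
        case True
        have "ennreal (1 / t) * ennreal (exp (- t) * (1 - exp (- t)) ^ K) = ennreal (exp (- t) * (1 - exp (- t)) ^ K / t)"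
          using True by (simp add: ennreal_mult''[symmetric])
        also have "\<dots> \<le> ennreal ((1 - exp (-t)) ^ (K - 1) * (1 - (1 - exp (-t)) / 2) * exp (-t))"
          using key_bound[of t K] True K by (intro ennreal_leI) auto
        finally show ?thesis using True by (simp add: inner)
      next
        case False
        then show ?thesis by (simp add: inner)
      qed
    qed
    also have "\<dots> = ennreal (1 / K - 1 / (2 * (K + 1)))"
      using int_h[of K] K by simp
    finally show ?thesis .
  qed
  have indXY: "indep_var borel X borel Y"
  proof -
    have "indep_var (PiM {0} (\<lambda>_. borel)) (\<lambda>\<omega>. restrict (\<lambda>i. H i \<omega>) {0})
                    (PiM {1..K} (\<lambda>_. borel)) (\<lambda>\<omega>. restrict (\<lambda>i. H i \<omega>) {1..K})"
      by (rule indep_var_restrict[OF ind]) auto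
    then have "indep_var borel ((\<lambda>f. f 0) \<circ> (\<lambda>\<omega>. restrict (\<lambda>i. H i \<omega>) {0}))
                    borel ((\<lambda>f. Max ((\<lambda>i. f i) ` {1..K})) \<circ> (\<lambda>\<omega>. restrict (\<lambda>i. H i \<omega>) {1..K}))"
    proof (rule indep_var_compose)
      show "(\<lambda>f. f 0) \<in> borel_measurable (PiM {0} (\<lambda>_. borel :: real measure))" by measurable
      show "(\<lambda>f. Max ((\<lambda>i. f i) ` {1..K})) \<in> borel_measurable (PiM {1..K} (\<lambda>_. borel :: real measure))"
        by (rule borel_measurable_Max) auto
    qed
    also have "(\<lambda>f. f 0) \<circ> (\<lambda>\<omega>. restrict (\<lambda>i. H i \<omega>) {0}) = X"
      by (auto simp: X_def)
    also have "(\<lambda>f. Max ((\<lambda>i. f i) ` {1..K})) \<circ> (\<lambda>\<omega>. restrict (\<lambda>i. H i \<omega>) {1..K}) = Y"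
      unfolding Y_def o_def by (intro ext arg_cong[where f=Max] image_cong) auto
    finally show ?thesis .
  qed
  define DX where "DX = distr M borel X"
  define DY where "DY = distr M borel Y"
  interpret DY: prob_space DY unfolding DY_def by (rule prob_space_distr) simp
  have joint: "DX \<Otimes>\<^sub>M DY = distr M (borel \<Otimes>\<^sub>M borel) (\<lambda>\<omega>. (X \<omega>, Y \<omega>))"
    using indXY unfolding indep_var_distribution_eq DX_def DY_def by simp
  define S where "S = {p :: real \<times> real. snd p \<le> fst p}"
  have Sm: "S \<in> sets (borel \<Otimes>\<^sub>M borel)"
  proof -
    have "S \<in> sets borel" unfolding S_def
      by (intro borel_closed closed_Collect_le continuous_intros)
    then show ?thesis by (subst borel_prod)
  qed
  have "emeasure M E = emeasure (distr M (borel \<Otimes>\<^sub>M borel) (\<lambda>\<omega>. (X \<omega>, Y \<omega>))) S"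
    by (subst emeasure_distr[OF _ Sm]) (auto simp: E_def S_def intro!: arg_cong[where f="emeasure M"])
  also have "\<dots> = emeasure (DX \<Otimes>\<^sub>M DY) S" by (simp add: joint)
  also have "\<dots> = (\<integral>\<^sup>+x. emeasure DY (Pair x -` S) \<partial>DX)"
    by (rule DY.emeasure_pair_measure_alt) (simp add: Sm DX_def DY_def)
  also have "\<dots> \<ge> (\<integral>\<^sup>+x. ennreal ((1 - exp (- x)) ^ K) * indicator {0..} x \<partial>DX)"
  proof (rule nn_integral_mono)
    fix x :: real
    show "ennreal ((1 - exp (- x)) ^ K) * indicator {0..} x \<le> emeasure DY (Pair x -` S)"
    proof (cases "0 \<le> x")
      case True
      have "emeasure DY (Pair x -` S) = emeasure M {\<omega> \<in> space M. Y \<omega> \<le> x}"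
        unfolding DY_def by (subst emeasure_distr) (auto simp: S_def intro!: arg_cong[where f="emeasure M"])
      also have "{\<omega> \<in> space M. Y \<omega> \<le> x} = (\<Inter>i\<in>{1..K}. H i -` {..x} \<inter> space M)"
        unfolding Yle using K by auto
      also have "emeasure M \<dots> = ennreal (\<Prod>i\<in>{1..K}. prob (H i -` {..x} \<inter> space M))"
        using indep_varsD[OF ind, of "{1..K}" "\<lambda>_. {..x}"] K by (simp add: emeasure_eq_measure)
      also have "(\<Prod>i\<in>{1..K}. prob (H i -` {..x} \<inter> space M)) = (\<Prod>i\<in>{1..K}. 1 - exp (- x))"
      proof (rule prod.cong)
        fix i assume i: "i \<in> {1..K}"
        then have "H i -` {..x} \<inter> space M = {\<omega> \<in> space M. H i \<omega> \<le> x}" by auto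
        then show "prob (H i -` {..x} \<inter> space M) = 1 - exp (- x)" using le_exp[of i x] i True by simp
      qed simp
      finally show ?thesis using True by simp
    next
      case False
      then show ?thesis by simp
    qed
  qed
  also have DXd: "DX = density lborel (exponential_density 1)"
  proof -
    have "DX = distr M lborel X" unfolding DX_def by (rule distr_cong) auto
    then show ?thesis using distributed_distr_eq_density[OF dist[of 0]] by (simp add: X_def)
  qed
  also have "(\<integral>\<^sup>+x. ennreal ((1 - exp (- x)) ^ K) * indicator {0..} x \<partial>density lborel (exponential_density 1))
      = (\<integral>\<^sup>+x. ennreal (exponential_density 1 x) * (ennreal ((1 - exp (- x)) ^ K) * indicator {0..} x) \<partial>lborel)"
    by (rule nn_integral_density) auto
  also have "\<dots> = (\<integral>\<^sup>+x. ennreal (exp (- x) * (1 - exp (- x)) ^ K) * indicator {0..} x \<partial>lborel)"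
    by (intro nn_integral_cong) (auto simp: exponential_density_def ennreal_mult'' split: split_indicator)
  also have "\<dots> = ennreal (1 / (K + 1))" by (rule int_P)
  finally have PE: "ennreal (1 / (K + 1)) \<le> emeasure M E" .
  define c0 where "c0 = 1 / real K - 1 / real (2 * (K + 1))"
  have k2: "(2::real) \<le> real K" using K by simp
  have c0: "0 \<le> c0" "c0 * (K + 1) \<le> 1"
  proof -
    have e0: "c0 * (K + 1) = (real K + 1) / real K - (real K + 1) / (2 * (real K + 1))"
      unfolding c0_def by (simp add: left_diff_distrib add.commute)
    have "(real K + 1) / (2 * (real K + 1)) = 1 / 2"
      using k2 by (simp add: field_simps)
    with e0 have e1: "c0 * (K + 1) = (real K + 1) / real K - 1 / 2" by simp
    have "(real K + 1) / real K \<le> 3 / 2" using k2 by (simp add: field_simps)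
    with e1 show "c0 * (K + 1) \<le> 1" by linarith
    have "(real K + 1) / real K \<ge> 1" using k2 by (simp add: field_simps)
    with e1 have "c0 * (K + 1) \<ge> 0" by linarith
    then show "0 \<le> c0" by (simp add: zero_le_mult_iff)
  qed
  have lnb: "0 < ln b" using b by simp
  define f where "f \<omega> = indicator E \<omega> *\<^sub>R log b (X \<omega> / Y \<omega>)" for \<omega>
  have fm: "f \<in> borel_measurable M" unfolding f_def by measurable
  have gm: "(\<lambda>\<omega>. indicator E \<omega> * ennreal (g \<omega>)) \<in> borel_measurable M" unfolding g_def by measurable
  have f_nn: "AE \<omega> in M. 0 \<le> f \<omega>"
  proof (rule eventually_mono[OF posXY])
    fix \<omega> assume a: "0 < X \<omega> \<and> 0 < Y \<omega>"
    show "0 \<le> f \<omega>"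
    proof (cases "\<omega> \<in> E")
      case True
      then have "1 \<le> X \<omega> / Y \<omega>" using a by (auto simp: E_def field_simps)
      then have "0 \<le> ln (X \<omega> / Y \<omega>)" by simp
      then show ?thesis using True lnb by (simp add: f_def log_def)
    qed (simp add: f_def)
  qed
  have nnf: "(\<integral>\<^sup>+\<omega>. ennreal (f \<omega>) \<partial>M) = ennreal (1 / ln b) * (\<integral>\<^sup>+\<omega>. indicator E \<omega> * ennreal (g \<omega>) \<partial>M)"
  proof -
    have "(\<integral>\<^sup>+\<omega>. ennreal (f \<omega>) \<partial>M) = (\<integral>\<^sup>+\<omega>. ennreal (1 / ln b) * (indicator E \<omega> * ennreal (g \<omega>)) \<partial>M)"
    proof (rule nn_integral_cong_AE, rule eventually_mono[OF posXY])
      fix \<omega> assume a: "0 < X \<omega> \<and> 0 < Y \<omega>"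
      show "ennreal (f \<omega>) = ennreal (1 / ln b) * (indicator E \<omega> * ennreal (g \<omega>))"
      proof (cases "\<omega> \<in> E")
        case True
        then have "1 \<le> X \<omega> / Y \<omega>" using a by (auto simp: E_def field_simps)
        then have "0 \<le> g \<omega>" by (simp add: g_def)
        then show ?thesis using True lnb
          by (simp add: f_def log_def g_def ennreal_mult[symmetric] divide_inverse mult.commute)
      qed (simp add: f_def)
    qed
    also have "\<dots> = ennreal (1 / ln b) * (\<integral>\<^sup>+\<omega>. indicator E \<omega> * ennreal (g \<omega>) \<partial>M)"
      by (rule nn_integral_cmult[OF gm])
    finally show ?thesis .
  qed
  have nnf_le: "(\<integral>\<^sup>+\<omega>. ennreal (f \<omega>) \<partial>M) \<le> ennreal (c0 / ln b)"
  proof -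
    have "(\<integral>\<^sup>+\<omega>. ennreal (f \<omega>) \<partial>M) \<le> ennreal (1 / ln b) * ennreal c0"
      unfolding nnf c0_def by (intro mult_left_mono I1) auto
    also have "\<dots> = ennreal (c0 / ln b)" using lnb c0 by (simp add: ennreal_mult[symmetric])
    finally show ?thesis .
  qed
  have intf: "integrable M f"
    by (rule integrableI_nonneg[OF fm f_nn]) (use le_less_trans[OF nnf_le ennreal_less_top] in simp)
  have LI: "integral\<^sup>L M f \<le> c0 / ln b"
  proof -
    have "integral\<^sup>L M f = enn2real (\<integral>\<^sup>+\<omega>. ennreal (f \<omega>) \<partial>M)"
      by (rule integral_eq_nn_integral[OF fm f_nn])
    also have "\<dots> \<le> enn2real (ennreal (c0 / ln b))"
      by (rule enn2real_mono[OF nnf_le]) simp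
    also have "\<dots> = c0 / ln b" using c0 lnb by simp
    finally show ?thesis .
  qed
  have LI0: "0 \<le> integral\<^sup>L M f" by (rule integral_nonneg_AE[OF f_nn])
  have PE': "1 / (K + 1) \<le> measure M E"
    using PE by (simp add: emeasure_eq_measure ennreal_le_iff del: of_nat_Suc)
  have ce: "cond_exp_event M (\<lambda>\<omega>. log b (X \<omega> / Y \<omega>)) E = integral\<^sup>L M f / measure M E"
    unfolding cond_exp_event_def f_def set_lebesgue_integral_def by simp
  have "integral\<^sup>L M f / measure M E \<le> (c0 / ln b) / (1 / (K + 1))"
    by (rule frac_le[OF _ LI _ PE']) (use LI0 lnb c0 in auto)
  also have "\<dots> = (c0 * (K + 1)) / ln b" by (simp add: field_simps)
  also have "\<dots> \<le> 1 / ln b" using c0 lnb by (intro divide_right_mono) auto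
  also have "\<dots> \<le> 2 * ln 2 / ln b" using ln2_ge_two_thirds lnb by (intro divide_right_mono) auto
  also have "\<dots> = 2 * log b 2" by (simp add: log_def)
  finally show ?thesis
    using intf ce unfolding f_def set_integrable_def by simp
qed
end

theorem lemma8:
  fixes M :: "'a measure" and H :: "nat \<Rightarrow> 'a \<Rightarrow> real" and K :: nat and b :: real
  assumes "prob_space M"
    and "K \<ge> 2"
    and "b > 1"
    and "prob_space.indep_vars M (\<lambda>_. borel) H {0..K}"
    and "\<And>i. i \<in> {0..K} \<Longrightarrow> distributed M lborel (H i) (exponential_density 1)"
  shows "set_integrable M {\<omega> \<in> space M. H 0 \<omega> \<ge> Max ((\<lambda>i. H i \<omega>) ` {1..K})} (\<lambda>\<omega>. log b (H 0 \<omega> / Max ((\<lambda>i. H i \<omega>) ` {1..K})))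
    \<and> cond_exp_event M (\<lambda>\<omega>. log b (H 0 \<omega> / Max ((\<lambda>i. H i \<omega>) ` {1..K}))) {\<omega> \<in> space M. H 0 \<omega> \<ge> Max ((\<lambda>i. H i \<omega>) ` {1..K})} \<le> 2 * log b 2"
  using prob_space.main[OF assms] .

end
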